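(* Let $G$ be a group and let $M$ and $K$ be normal subgroups of $G$, where $M$ is finitely generated as a normal subgroup of $G$. If $H$ is a finite index normal subgroup of $G$ containing $M$, then \[relsize(M;H,K\cap H)\le |G:H|\,relsize(M;G,K).\]
   Context: For a group $G$, a normal subgroup $K$ and $g\in G$, with $\pi:G\to G/K$ the quotient map: if $g\in K$, $\nu(g;G,K)$ is the supremum of the orders of $\pi(a)$ in $G/K$ over all $a\in G$ with $a^n=g$ for some integer $n$; if $g\notin K$, $\nu(g;G,K)$ is the supremum of all non-zero integers $n$ with $g=a^n$ for some $a\in G$; $\nu(g;G,K)^{-1}$ is taken to be $0$ if $\nu(g;G,K)$ is infinite. For a finite set $S=\{s_1,\ldots,s_m\}\subseteq G$, $relsize(S;G,K)=\sum_{i=1}^m\nu(s_i;G,K)^{-1}$. For a normal subgroup $M$ of $G$ finitely generated as a normal subgroup, $relsize(M;G,K)$ is the infimum of $relsize(S;G,K)$ over all finite $S\subseteq G$ whose normal closure in $G$ is $M$. Likewise $relsize(M;H,K\cap H)$ is computed in the group $H$ with its normal subgroup $K\cap H$, over finite $S\subseteq H$ whose normal closure in $H$ is $M$. *)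

theory Defs
  imports "HOL-Algebra.Algebra" "HOL-Library.Extended_Real"
begin

text \<open>Order of an element, with infinite order rendered as \<infinity>
 (HOL-Algebra's group.ord is 0 for elements of infinite order).\<close>
definition elt_order :: "('a, 'b) monoid_scheme \<Rightarrow> 'a \<Rightarrow> enat" where
  "elt_order G x = (if group.ord G x = 0 then \<infinity> else enat (group.ord G x))"

definition nu :: "('a, 'b) monoid_scheme \<Rightarrow> 'a set \<Rightarrow> 'a \<Rightarrow> enat" where
  "nu G K g =
    (if g \<in> K then
       Sup {elt_order (G Mod K) (K #>\<^bsub>G\<^esub> a) | a. a \<in> carrier G \<and> (\<exists>n::int. a [^]\<^bsub>G\<^esub> n = g)}
     else
       Sup {enat (nat n) | n::int. n \<noteq> 0 \<and> (\<exists>a\<in>carrier G. g = a [^]\<^bsub>G\<^esub> n)})"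

definition nu_inv :: "('a, 'b) monoid_scheme \<Rightarrow> 'a set \<Rightarrow> 'a \<Rightarrow> real" where
  "nu_inv G K g = (case nu G K g of enat m \<Rightarrow> 1 / real m | \<infinity> \<Rightarrow> 0)"

definition relsize_set :: "('a, 'b) monoid_scheme \<Rightarrow> 'a set \<Rightarrow> 'a set \<Rightarrow> real" where
  "relsize_set G K S = (\<Sum>s\<in>S. nu_inv G K s)"

definition normal_closure :: "('a, 'b) monoid_scheme \<Rightarrow> 'a set \<Rightarrow> 'a set" where
  "normal_closure G S = \<Inter> {N. N \<lhd> G \<and> S \<subseteq> N}"

definition relsize :: "('a, 'b) monoid_scheme \<Rightarrow> 'a set \<Rightarrow> 'a set \<Rightarrow> ereal" where
  "relsize G K M = Inf {ereal (relsize_set G K S) | S.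
      finite S \<and> S \<subseteq> carrier G \<and> normal_closure G S = M}"

end

theory Submission
  imports Defs
begin
lemma arith_m1: "0 < (r::nat) \<Longrightarrow> 1 \<le> N \<Longrightarrow> 1 \<le> (N + r - 1) div r"
  by (metis div_greater_zero_iff le_add_diff dec_less_imp_less_eq add.right_neutral add_diff_cancel_left')
lemma arith_m2: assumes "0 < (r::nat)" shows "N \<le> ((N + r - 1) div r) * r"
proof -
  have "(N+r-1) mod r < r" using assms by simp
  moreover have "(N+r-1) div r * r + (N+r-1) mod r = N+r-1" by (rule div_mult_mod_eq)
  ultimately show ?thesis using assms by linarith
qed
lemma arith_m3: assumes "0 < (r::nat)" "j < (N + r - 1) div r" shows "r * j < N"
proof -
  have "Suc j * r \<le> (N + r - 1) div r * r" using assms(2) by (intro mult_le_mono1) simp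
  moreover have "(N + r - 1) div r * r \<le> N + r - 1" by (rule div_times_less_eq_dividend)
  ultimately have "Suc j * r \<le> N + r - 1" by (rule le_trans)
  then have "r * j + r \<le> N + r - 1" by (simp add: algebra_simps)
  then show ?thesis using assms(1) by linarith
qed
lemma arith_m4: assumes "1 \<le> (m::nat)" "1 \<le> (N::nat)" "N \<le> m * r" shows "1 / real m \<le> real r / real N"
proof -
  have "real N \<le> real m * real r" using assms(3) by (simp flip: of_nat_mult)
  then show ?thesis using assms(1,2) by (simp add: divide_simps mult.commute)
qed
lemma enat_Sup_wit:
  fixes A :: "enat set"
  assumes "enat N \<le> Sup A" "1 \<le> N"
  shows "\<exists>x\<in>A. enat N \<le> x"
proof -
  have N: "N = Suc (N - 1)" using assms(2) by simp
  have "enat (N - 1) < Sup A" using assms(1) N Suc_ile_eq by metis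
  then obtain x where "x \<in> A" "enat (N - 1) < x" using less_Sup_iff by blast
  then show ?thesis using N Suc_ile_eq by metis
qed

lemma eo_ge:
  assumes "group Q" "y \<in> carrier Q"
    and "\<And>j. 0 < j \<Longrightarrow> j < m \<Longrightarrow> y [^]\<^bsub>Q\<^esub> (j::nat) \<noteq> \<one>\<^bsub>Q\<^esub>"
  shows "enat m \<le> elt_order Q y"
proof (cases "group.ord Q y = 0")
  case True then show ?thesis by (simp add: elt_order_def)
next
  case False
  have "y [^]\<^bsub>Q\<^esub> group.ord Q y = \<one>\<^bsub>Q\<^esub>"
    using group.pow_ord_eq_1[OF assms(1,2)] .
  have "\<not> group.ord Q y < m"
  proof
    assume "group.ord Q y < m"
    then show False using assms(3)[of "group.ord Q y"] False \<open>y [^]\<^bsub>Q\<^esub> group.ord Q y = \<one>\<^bsub>Q\<^esub>\<close> by simp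
  qed
  then show ?thesis using False by (simp add: elt_order_def)
qed

lemma eo_le:
  assumes "group Q" "y \<in> carrier Q" "0 < j" "y [^]\<^bsub>Q\<^esub> (j::nat) = \<one>\<^bsub>Q\<^esub>"
  shows "elt_order Q y \<le> enat j"
proof -
  have "group.ord Q y dvd j" using group.pow_eq_id[OF assms(1,2)] assms(4) by blast
  then have "group.ord Q y \<noteq> 0" using assms(3) by auto
  moreover have "group.ord Q y \<le> j" using \<open>group.ord Q y dvd j\<close> assms(3) by (simp add: dvd_imp_le)
  ultimately show ?thesis by (simp add: elt_order_def)
qed

lemma nu_inv_le:
  assumes "enat m \<le> nu G K g" "1 \<le> m"
  shows "nu_inv G K g \<le> 1 / real m"
proof (cases "nu G K g")
  case (enat k)
  then have "m \<le> k" using assms by simp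
  then have "1 / real k \<le> 1 / real m" using assms(2) by (simp add: frac_le)
  then show ?thesis using enat by (simp add: nu_inv_def)
next
  case infinity then show ?thesis by (simp add: nu_inv_def)
qed

lemma nu_inv_nonneg: "0 \<le> nu_inv G K g"
  unfolding nu_inv_def by (simp split: enat.split)

lemma (in normal) pow_in_iff:
  assumes "a \<in> carrier G"
  shows "(r_coset G H a) [^]\<^bsub>G Mod H\<^esub> (j::nat) = \<one>\<^bsub>G Mod H\<^esub> \<longleftrightarrow> a [^] j \<in> H"
proof -
  have e: "(r_coset G H a) [^]\<^bsub>G Mod H\<^esub> j = H #> (a [^] j)" by (rule FactGroup_pow[OF assms])
  have c: "a [^] j \<in> carrier G" using assms by simp
  show ?thesis
  proof
    assume "(r_coset G H a) [^]\<^bsub>G Mod H\<^esub> j = \<one>\<^bsub>G Mod H\<^esub>"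
    then have "H #> (a [^] j) = H" using e by simp
    then show "a [^] j \<in> H" using coset_join1[OF _ c subgroup_axioms] by simp
  next
    assume "a [^] j \<in> H"
    then have "H #> (a [^] j) = H" using coset_join2[OF c subgroup_axioms] by simp
    then show "(r_coset G H a) [^]\<^bsub>G Mod H\<^esub> j = \<one>\<^bsub>G Mod H\<^esub>" using e by simp
  qed
qed

lemma (in group) normal_closure_normal:
  assumes "S \<subseteq> carrier G"
  shows "normal_closure G S \<lhd> G" "S \<subseteq> normal_closure G S"
proof -
  let ?F = "{N. N \<lhd> G \<and> S \<subseteq> N}"
  have ne: "carrier G \<in> ?F" using assms normal_inv_iff subgroup_self by auto
  have sg: "subgroup (\<Inter>?F) G"
    by (rule subgroups_Inter) (use ne normal_imp_subgroup in auto)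
  show "normal_closure G S \<lhd> G" unfolding normal_closure_def
    by (rule normal_invI[OF sg]) (auto intro: normal.inv_op_closed2)
  show "S \<subseteq> normal_closure G S" unfolding normal_closure_def by auto
qed

lemma normal_closure_least:
  "N \<lhd> G \<Longrightarrow> S \<subseteq> N \<Longrightarrow> normal_closure G S \<subseteq> N"
  unfolding normal_closure_def by auto

lemma cover_subset:
  assumes "finite A" "\<And>x. x \<in> A \<Longrightarrow> R x x" "\<And>x y. x \<in> A \<Longrightarrow> y \<in> A \<Longrightarrow> R x y \<Longrightarrow> R y x"
  shows "\<exists>B\<subseteq>A. (\<forall>a\<in>A. \<exists>b\<in>B. R a b) \<and> (\<forall>b1\<in>B. \<forall>b2\<in>B. R b1 b2 \<longrightarrow> b1 = b2)"
proof -
  have "\<And>F. finite F \<Longrightarrow> F \<subseteq> A \<Longrightarrow> \<exists>B\<subseteq>F. (\<forall>a\<in>F. \<exists>b\<in>B. R a b) \<and> (\<forall>b1\<in>B. \<forall>b2\<in>B. R b1 b2 \<longrightarrow> b1 = b2)"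
  proof -
    fix F assume "finite F" "F \<subseteq> A"
    then show "\<exists>B\<subseteq>F. (\<forall>a\<in>F. \<exists>b\<in>B. R a b) \<and> (\<forall>b1\<in>B. \<forall>b2\<in>B. R b1 b2 \<longrightarrow> b1 = b2)"
    proof (induction F rule: finite_induct)
      case empty then show ?case by blast
    next
      case (insert x F)
      then obtain B where B: "B \<subseteq> F" "\<forall>a\<in>F. \<exists>b\<in>B. R a b" "\<forall>b1\<in>B. \<forall>b2\<in>B. R b1 b2 \<longrightarrow> b1 = b2"
        by blast
      have xA: "x \<in> A" using insert.prems by blast
      have BA: "B \<subseteq> A" using B(1) insert.prems by blast
      show ?case
      proof (cases "\<exists>b\<in>B. R x b")
        case True then show ?thesis using B by (intro exI[of _ B]) blast
      next
        case False
        have sym: "\<And>b. b \<in> B \<Longrightarrow> R b x \<Longrightarrow> False"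
          using False assms(3) xA BA by blast
        show ?thesis
        proof (intro exI[of _ "insert x B"] conjI)
          show "insert x B \<subseteq> insert x F" using B by blast
          show "\<forall>a\<in>insert x F. \<exists>b\<in>insert x B. R a b" using B assms(2)[OF xA] by blast
          show "\<forall>b1\<in>insert x B. \<forall>b2\<in>insert x B. R b1 b2 \<longrightarrow> b1 = b2"
            using B(3) False sym by blast
        qed
      qed
    qed
  qed
  then show ?thesis using assms(1) by blast
qed

context group begin

lemma conj_mult:
  assumes "g1 \<in> carrier G" "g2 \<in> carrier G" "z \<in> carrier G"
  shows "(g1 \<otimes> g2) \<otimes> z \<otimes> inv (g1 \<otimes> g2) = g1 \<otimes> (g2 \<otimes> z \<otimes> inv g2) \<otimes> inv g1"
  using assms by (simp add: inv_mult_group m_assoc)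

lemma pow_comm_conj:
  assumes "a \<in> carrier G"
  shows "a [^] (i::nat) \<otimes> a [^] (n::int) \<otimes> inv (a [^] i) = a [^] n"
proof -
  have "a [^] i \<otimes> a [^] n = a [^] (int i + n)" using int_pow_mult[OF assms, of "int i" n] by (simp add: int_pow_int)
  also have "\<dots> = a [^] (n + int i)" by (simp add: add.commute)
  also have "\<dots> = a [^] n \<otimes> a [^] i" using int_pow_mult[OF assms, of n "int i"] by (simp add: int_pow_int)
  finally have "a [^] i \<otimes> a [^] n = a [^] n \<otimes> a [^] i" .
  then show ?thesis using assms by (simp add: m_assoc)
qed

lemma conj_hom:
  assumes "x \<in> carrier G"
  shows "(\<lambda>y. x \<otimes> y \<otimes> inv x) \<in> hom G G"
proof (rule homI)
  fix y assume "y \<in> carrier G" then show "x \<otimes> y \<otimes> inv x \<in> carrier G" using assms by simp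
next
  fix y z assume "y \<in> carrier G" "z \<in> carrier G"
  moreover have "inv x \<otimes> (x \<otimes> (z \<otimes> inv x)) = z \<otimes> inv x"
    using assms \<open>z \<in> carrier G\<close> by (simp add: m_assoc[symmetric])
  ultimately show "x \<otimes> (y \<otimes> z) \<otimes> inv x = x \<otimes> y \<otimes> inv x \<otimes> (x \<otimes> z \<otimes> inv x)"
    using assms by (simp add: m_assoc)
qed

lemma conj_int_pow:
  assumes "x \<in> carrier G" "y \<in> carrier G"
  shows "(x \<otimes> y \<otimes> inv x) [^] (z::int) = x \<otimes> (y [^] z) \<otimes> inv x"
  using hom_int_pow[OF conj_hom[OF assms(1)] assms(2) is_group is_group] by simp

lemma conj_nat_pow:
  assumes "x \<in> carrier G" "y \<in> carrier G"
  shows "(x \<otimes> y \<otimes> inv x) [^] (z::nat) = x \<otimes> (y [^] z) \<otimes> inv x"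
  using hom_nat_pow[OF conj_hom[OF assms(1)] assms(2) is_group is_group] by simp

lemma exists_pow_in:
  assumes "subgroup H G" "finite (rcosets H)" "a \<in> carrier G"
  shows "\<exists>i>0. a [^] (i::nat) \<in> H"
proof -
  define k where "k = card (rcosets H)"
  define f where "f = (\<lambda>i::nat. H #> (a [^] i))"
  have sub: "f ` {0..k} \<subseteq> rcosets H"
    unfolding f_def using rcosetsI subgroup.subset[OF assms(1)] assms(3) by auto
  have "\<not> inj_on f {0..k}"
  proof
    assume "inj_on f {0..k}"
    then have "card {0..k} \<le> card (rcosets H)" using card_inj_on_le[OF _ sub assms(2)] by blast
    then show False unfolding k_def by simp
  qed
  then obtain i j where ij: "i \<in> {0..k}" "j \<in> {0..k}" "i \<noteq> j" "f i = f j"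
    unfolding inj_on_def by blast
  have "\<exists>i j::nat. i < j \<and> f i = f j" using ij by (metis linorder_neqE_nat)
  then obtain i j :: nat where ij2: "i < j" "H #> (a [^] i) = H #> (a [^] j)" unfolding f_def by blast
  have "a [^] j \<in> H #> (a [^] i)" using ij2(2) rcos_self[OF _ assms(1), of "a [^] j"] assms(3) by simp
  then have "a [^] j \<otimes> inv (a [^] i) \<in> H"
    using subgroup.rcos_module_imp[OF assms(1) is_group, of "a [^] i"] assms(3) by simp
  moreover have "a [^] j = a [^] (j - i) \<otimes> a [^] i" using ij2(1) assms(3) by (simp add: nat_pow_mult)
  ultimately have "a [^] (j - i) \<in> H" using assms(3) by (simp add: m_assoc)
  then show ?thesis using ij2(1) by (intro exI[of _ "j - i"]) simp
qed

lemma pow_in_dvd: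
  assumes "subgroup H G" "a \<in> carrier G" "a [^] r \<in> H"
    and "\<And>i. 0 < i \<Longrightarrow> i < r \<Longrightarrow> a [^] (i::nat) \<notin> H" and "a [^] (z::int) \<in> H" and "0 < r"
  shows "int r dvd z"
proof -
  define q where "q = z div int r"
  define m where "m = z mod int r"
  have zq: "z = int r * q + m" unfolding q_def m_def by simp
  have m0: "0 \<le> m" "m < int r" unfolding m_def using assms(6) by auto
  have "a [^] z = a [^] (int r * q) \<otimes> a [^] m" using zq int_pow_mult[OF assms(2)] by simp
  moreover have "a [^] (int r * q) = (a [^] r) [^] q" using int_pow_pow[OF assms(2), of "int r" q] by (simp add: int_pow_int)
  moreover have "(a [^] r) [^] q \<in> H" using subgroup_int_pow_closed[OF assms(1) assms(3)] .
  ultimately have "a [^] m = inv ((a [^] r) [^] q) \<otimes> a [^] z"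
    using assms(2) by (simp add: inv_solve_left)
  moreover have "inv ((a [^] r) [^] q) \<otimes> a [^] z \<in> H"
    using assms(1,5) \<open>(a [^] r) [^] q \<in> H\<close> by (simp add: subgroup.m_closed subgroup.m_inv_closed)
  ultimately have inH: "a [^] (nat m) \<in> H" using m0 by (simp add: int_pow_int[symmetric])
  have "nat m = 0"
  proof (rule ccontr)
    assume "nat m \<noteq> 0"
    then show False using assms(4)[of "nat m"] inH m0 by simp
  qed
  then have "m = 0" using m0 by simp
  then show ?thesis unfolding m_def by (simp add: dvd_eq_mod_eq_0)
qed


lemma cancel1 [simp]: "x \<in> carrier G \<Longrightarrow> y \<in> carrier G \<Longrightarrow> inv x \<otimes> (x \<otimes> y) = y"
  by (simp add: m_assoc[symmetric])
lemma cancel2 [simp]: "x \<in> carrier G \<Longrightarrow> y \<in> carrier G \<Longrightarrow> x \<otimes> (inv x \<otimes> y) = y"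
  by (simp add: m_assoc[symmetric])

lemma R_sym:
  assumes "subgroup H G" "h \<in> H" "w \<in> carrier G" "v = h \<otimes> w \<otimes> inv h"
  shows "w = inv h \<otimes> v \<otimes> inv (inv h)" "inv h \<in> H"
proof -
  have hc: "h \<in> carrier G" using subgroup.mem_carrier[OF assms(1,2)] .
  show "w = inv h \<otimes> v \<otimes> inv (inv h)" using assms(3,4) hc by (simp add: m_assoc)
  show "inv h \<in> H" using subgroup.m_inv_closed[OF assms(1,2)] .
qed

lemma R_trans:
  assumes "subgroup H G" "h1 \<in> H" "h2 \<in> H" "w \<in> carrier G"
    and "v = h1 \<otimes> u \<otimes> inv h1" "u = h2 \<otimes> w \<otimes> inv h2"
  shows "v = (h1 \<otimes> h2) \<otimes> w \<otimes> inv (h1 \<otimes> h2)" "h1 \<otimes> h2 \<in> H"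
proof -
  have hc: "h1 \<in> carrier G" "h2 \<in> carrier G" using subgroup.mem_carrier[OF assms(1)] assms(2,3) by auto
  show "v = (h1 \<otimes> h2) \<otimes> w \<otimes> inv (h1 \<otimes> h2)" using conj_mult[OF hc assms(4)] assms(5,6) by simp
  show "h1 \<otimes> h2 \<in> H" using subgroup.m_closed[OF assms(1,2,3)] .
qed


lemma conj_mult2:
  assumes "x \<in> carrier G" "y1 \<in> carrier G" "y2 \<in> carrier G"
  shows "x \<otimes> (y1 \<otimes> y2) \<otimes> inv x = (x \<otimes> y1 \<otimes> inv x) \<otimes> (x \<otimes> y2 \<otimes> inv x)"
  using hom_mult[OF conj_hom[OF assms(1)] assms(2,3)] by simp

lemma conj_inv:
  assumes "x \<in> carrier G" "y \<in> carrier G"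
  shows "x \<otimes> inv y \<otimes> inv x = inv (x \<otimes> y \<otimes> inv x)"
  using assms by (simp add: inv_mult_group m_assoc)

lemma closure_eq:
  assumes HN: "H \<lhd> G" and MN: "M \<lhd> G" and MH: "M \<subseteq> H" and SG: "S \<subseteq> carrier G"
    and SM: "normal_closure G S = M"
    and TH: "T \<subseteq> H" and Tconj: "\<forall>t\<in>T. \<exists>s\<in>S. \<exists>g\<in>carrier G. t = g \<otimes> s \<otimes> inv g"
    and cov: "\<forall>s\<in>S. \<forall>g\<in>carrier G. \<exists>h\<in>H. \<exists>w\<in>T. g \<otimes> s \<otimes> inv g = h \<otimes> w \<otimes> inv h"
  shows "normal_closure (G\<lparr>carrier := H\<rparr>) T = M"
proof
  have HS: "subgroup H G" using HN normal_imp_subgroup by blast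
  have grpH: "group (G\<lparr>carrier := H\<rparr>)" using subgroup.subgroup_is_group[OF HS is_group] .
  have Hc: "\<And>z. z \<in> H \<Longrightarrow> z \<in> carrier G" using subgroup.mem_carrier[OF HS] by blast
  have SinM: "S \<subseteq> M" using normal_closure_normal(2)[OF SG] SM by simp
  have TM: "T \<subseteq> M"
  proof
    fix t assume "t \<in> T"
    then obtain s g where "s \<in> S" "g \<in> carrier G" "t = g \<otimes> s \<otimes> inv g" using Tconj by blast
    then show "t \<in> M" using normal.inv_op_closed2[OF MN] SinM by blast
  qed
  have MnH: "M \<lhd> G\<lparr>carrier := H\<rparr>" using normal_restrict_supergroup[OF HS MN MH] .
  show "normal_closure (G\<lparr>carrier := H\<rparr>) T \<subseteq> M" using normal_closure_least[OF MnH TM] .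
  have conjHH: "z \<otimes> y \<otimes> inv z \<in> N'" if "N' \<lhd> G\<lparr>carrier := H\<rparr>" "z \<in> H" "y \<in> N'" for N' z y
    using normal.inv_op_closed2[OF that(1), of z y] that(2,3) m_inv_consistent[OF HS that(2)] by simp
  have N'G: "subgroup N' G" if "N' \<lhd> G\<lparr>carrier := H\<rparr>" for N'
    using incl_subgroup[OF HS normal_imp_subgroup[OF that]] .
  define NT where "NT = normal_closure (G\<lparr>carrier := H\<rparr>) T"
  have NTn: "NT \<lhd> G\<lparr>carrier := H\<rparr>" and TNT: "T \<subseteq> NT"
    using group.normal_closure_normal[OF grpH, of T] TH unfolding NT_def by auto
  have NTnG: "NT \<lhd> G"
  proof (rule normal_invI)
    show "subgroup NT G" using N'G[OF NTn] .
  next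
    fix x y assume xc: "x \<in> carrier G" and yNT: "y \<in> NT"
    show "x \<otimes> y \<otimes> inv x \<in> NT" unfolding NT_def normal_closure_def
    proof (rule InterI)
      fix N' assume "N' \<in> {N. N \<lhd> G\<lparr>carrier := H\<rparr> \<and> T \<subseteq> N}"
      then have N'n: "N' \<lhd> G\<lparr>carrier := H\<rparr>" and TN': "T \<subseteq> N'" by auto
      have N'S: "subgroup N' G" using N'G[OF N'n] .
      define P where "P = {y \<in> H. x \<otimes> y \<otimes> inv x \<in> N'}"
      have PH: "P \<subseteq> H" unfolding P_def by auto
      have PG: "subgroup P G"
      proof (rule subgroupI)
        show "P \<subseteq> carrier G" using PH Hc by blast
        have "\<one> \<in> P" unfolding P_def using subgroup.one_closed[OF HS] subgroup.one_closed[OF N'S] xc by simp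
        then show "P \<noteq> {}" by blast
      next
        fix y assume "y \<in> P"
        then have yH: "y \<in> H" and yN: "x \<otimes> y \<otimes> inv x \<in> N'" unfolding P_def by auto
        have "x \<otimes> inv y \<otimes> inv x = inv (x \<otimes> y \<otimes> inv x)" using conj_inv[OF xc Hc[OF yH]] .
        then show "inv y \<in> P" unfolding P_def
          using subgroup.m_inv_closed[OF HS yH] subgroup.m_inv_closed[OF N'S yN] yH by simp
      next
        fix y1 y2 assume "y1 \<in> P" "y2 \<in> P"
        then have yH: "y1 \<in> H" "y2 \<in> H" and yN: "x \<otimes> y1 \<otimes> inv x \<in> N'" "x \<otimes> y2 \<otimes> inv x \<in> N'"
          unfolding P_def by auto
        show "y1 \<otimes> y2 \<in> P" unfolding P_def
          using subgroup.m_closed[OF HS yH] subgroup.m_closed[OF N'S yN] conj_mult2[OF xc Hc[OF yH(1)] Hc[OF yH(2)]]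
          by simp
      qed
      have PHH: "subgroup P (G\<lparr>carrier := H\<rparr>)" using subgroup_incl[OF PG HS PH] .
      have Pn: "P \<lhd> G\<lparr>carrier := H\<rparr>"
      proof (rule group.normal_invI[OF grpH PHH])
        fix z y assume "z \<in> carrier (G\<lparr>carrier := H\<rparr>)" "y \<in> P"
        then have zH: "z \<in> H" and yH: "y \<in> H" and yN: "x \<otimes> y \<otimes> inv x \<in> N'" unfolding P_def by auto
        have zc: "z \<in> carrier G" and yc: "y \<in> carrier G" using zH yH Hc by auto
        have zyz: "z \<otimes> y \<otimes> inv z \<in> H"
          using subgroup.m_closed[OF HS subgroup.m_closed[OF HS zH yH] subgroup.m_inv_closed[OF HS zH]] .
        have xzx: "x \<otimes> z \<otimes> inv x \<in> H" using normal.inv_op_closed2[OF HN xc zH] .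
        have "x \<otimes> (z \<otimes> y \<otimes> inv z) \<otimes> inv x = (x \<otimes> z \<otimes> inv x) \<otimes> (x \<otimes> y \<otimes> inv x) \<otimes> inv (x \<otimes> z \<otimes> inv x)"
          using xc zc yc by (simp add: inv_mult_group m_assoc)
        moreover have "\<dots> \<in> N'" using conjHH[OF N'n xzx yN] .
        ultimately have "z \<otimes> y \<otimes> inv z \<in> P" unfolding P_def using zyz by simp
        then show "z \<otimes>\<^bsub>G\<lparr>carrier := H\<rparr>\<^esub> y \<otimes>\<^bsub>G\<lparr>carrier := H\<rparr>\<^esub> inv\<^bsub>G\<lparr>carrier := H\<rparr>\<^esub> z \<in> P"
          using m_inv_consistent[OF HS zH] by simp
      qed
      have TP: "T \<subseteq> P"
      proof
        fix t assume tT: "t \<in> T"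
        then obtain s g where sg: "s \<in> S" "g \<in> carrier G" "t = g \<otimes> s \<otimes> inv g" using Tconj by blast
        have sc: "s \<in> carrier G" using sg(1) SG by blast
        have "x \<otimes> t \<otimes> inv x = (x \<otimes> g) \<otimes> s \<otimes> inv (x \<otimes> g)" using conj_mult[OF xc sg(2) sc] sg(3) by simp
        moreover obtain h w where hw: "h \<in> H" "w \<in> T" "(x \<otimes> g) \<otimes> s \<otimes> inv (x \<otimes> g) = h \<otimes> w \<otimes> inv h"
          using cov sg(1) xc sg(2) by (meson m_closed)
        ultimately have "x \<otimes> t \<otimes> inv x \<in> N'" using conjHH[OF N'n hw(1)] TN' by auto
        then show "t \<in> P" unfolding P_def using tT TH by auto
      qed
      have "NT \<subseteq> P" unfolding NT_def using normal_closure_least[OF Pn TP] .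
      then show "x \<otimes> y \<otimes> inv x \<in> N'" using yNT unfolding P_def by auto
    qed
  qed
  have SNT: "S \<subseteq> NT"
  proof
    fix s assume sS: "s \<in> S"
    then obtain h w where hw: "h \<in> H" "w \<in> T" "\<one> \<otimes> s \<otimes> inv \<one> = h \<otimes> w \<otimes> inv h"
      using cov by (meson one_closed)
    have "s = h \<otimes> w \<otimes> inv h" using hw(3) sS SG by auto
    then show "s \<in> NT" using conjHH[OF NTn hw(1)] TNT hw(2) by auto
  qed
  show "M \<subseteq> normal_closure (G\<lparr>carrier := H\<rparr>) T"
    using normal_closure_least[OF NTnG SNT] SM unfolding NT_def by simp
qed

lemma core:
  assumes HN: "H \<lhd> G" and fin: "finite (rcosets H)" and KN: "K \<lhd> G"
    and sH: "s \<in> H" and N1: "1 \<le> N" and Nle: "enat N \<le> nu G K s"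
  shows "\<exists>T. finite T \<and> T \<subseteq> H \<and> (\<forall>w\<in>T. \<exists>x\<in>carrier G. w = x \<otimes> s \<otimes> inv x)
     \<and> (\<forall>g\<in>carrier G. \<exists>h\<in>H. \<exists>w\<in>T. g \<otimes> s \<otimes> inv g = h \<otimes> w \<otimes> inv h)
     \<and> (\<Sum>w\<in>T. nu_inv (G\<lparr>carrier := H\<rparr>) (K \<inter> H) w) \<le> real (card (rcosets H)) / real N"
proof -
  have HS: "subgroup H G" using HN normal_imp_subgroup by blast
  have KS: "subgroup K G" using KN normal_imp_subgroup by blast
  have sc: "s \<in> carrier G" using sH subgroup.mem_carrier[OF HS] by blast
  obtain a and n :: int where ac: "a \<in> carrier G" and an: "a [^] n = s"
    and good: "(s \<notin> K \<and> int N \<le> n) \<or> (s \<in> K \<and> enat N \<le> elt_order (G Mod K) (K #> a))"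
  proof (cases "s \<in> K")
    case True
    then have "enat N \<le> Sup {elt_order (G Mod K) (K #> a) | a. a \<in> carrier G \<and> (\<exists>n::int. a [^] n = s)}"
      using Nle unfolding nu_def by simp
    from enat_Sup_wit[OF this N1] obtain a n where "a \<in> carrier G" "a [^] (n::int) = s" "enat N \<le> elt_order (G Mod K) (K #> a)"
      by blast
    then show ?thesis using that True by blast
  next
    case False
    then have "enat N \<le> Sup {enat (nat n) | n::int. n \<noteq> 0 \<and> (\<exists>a\<in>carrier G. s = a [^] n)}"
      using Nle unfolding nu_def by simp
    from enat_Sup_wit[OF this N1] obtain a n where "a \<in> carrier G" "s = a [^] (n::int)" "enat N \<le> enat (nat n)"
      by blast
    then have "N \<le> nat n" by simp
    then have "int N \<le> n" using N1 by linarith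
    then show ?thesis using that False \<open>a \<in> carrier G\<close> \<open>s = a [^] n\<close> by metis
  qed
  define r where "r = (LEAST i::nat. 0 < i \<and> a [^] i \<in> H)"
  have rex: "\<exists>i::nat. 0 < i \<and> a [^] i \<in> H" using exists_pow_in[OF HS fin ac] by blast
  have r0: "0 < r" and arH: "a [^] r \<in> H" using LeastI_ex[OF rex] unfolding r_def by auto
  have rmin: "\<And>i. 0 < i \<Longrightarrow> i < r \<Longrightarrow> a [^] (i::nat) \<notin> H"
    using not_less_Least unfolding r_def by blast
  have rdvd: "\<And>z::int. a [^] z \<in> H \<Longrightarrow> int r dvd z"
    using pow_in_dvd[OF HS ac arH rmin _ r0] by blast
  define q where "q = n div int r"
  have nq: "n = int r * q" unfolding q_def using rdvd[of n] an sH by simp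
  define rep where "rep = (\<lambda>c::'a set. SOME x. x \<in> c)"
  have rep_in: "\<And>g. g \<in> carrier G \<Longrightarrow> rep (H #> g) \<in> H #> g"
    unfolding rep_def by (rule someI) (rule rcos_self[OF _ HS])
  have rep_c: "\<And>g. g \<in> carrier G \<Longrightarrow> rep (H #> g) \<in> carrier G"
    using rep_in subgroup.elemrcos_carrier[OF HS is_group] by blast
  define T0 where "T0 = (\<lambda>c. rep c \<otimes> s \<otimes> inv (rep c)) ` (rcosets H)"
  have T0fin: "finite T0" unfolding T0_def using fin by simp
  have T0c: "T0 \<subseteq> carrier G"
    unfolding T0_def RCOSETS_def using rep_c sc by auto
  have T0conj: "\<forall>w\<in>T0. \<exists>x\<in>carrier G. w = x \<otimes> s \<otimes> inv x"
    unfolding T0_def RCOSETS_def using rep_c by auto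
  define R where "R = (\<lambda>v w. \<exists>h\<in>H. v = h \<otimes> w \<otimes> inv h)"
  have Rrefl: "\<And>x. x \<in> T0 \<Longrightarrow> R x x"
    unfolding R_def using T0c subgroup.one_closed[OF HS] by (metis in_mono l_one r_one inv_one one_closed m_closed)
  have Rsym: "\<And>x y. x \<in> T0 \<Longrightarrow> y \<in> T0 \<Longrightarrow> R x y \<Longrightarrow> R y x"
    unfolding R_def using R_sym[OF HS] T0c by blast
  obtain T where TT0: "T \<subseteq> T0" and Tcov: "\<forall>v\<in>T0. \<exists>w\<in>T. R v w"
    and Tdist: "\<forall>b1\<in>T. \<forall>b2\<in>T. R b1 b2 \<longrightarrow> b1 = b2"
    using cover_subset[OF T0fin, of R] Rrefl Rsym by blast
  have Tfin: "finite T" using TT0 T0fin finite_subset by blast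
  have Tconj: "\<forall>w\<in>T. \<exists>x\<in>carrier G. w = x \<otimes> s \<otimes> inv x" using TT0 T0conj by blast
  have TH: "T \<subseteq> H"
  proof
    fix w assume "w \<in> T"
    then obtain x where "x \<in> carrier G" "w = x \<otimes> s \<otimes> inv x" using Tconj by blast
    then show "w \<in> H" using normal.inv_op_closed2[OF HN _ sH] by simp
  qed
  have Tcover: "\<forall>g\<in>carrier G. \<exists>h\<in>H. \<exists>w\<in>T. g \<otimes> s \<otimes> inv g = h \<otimes> w \<otimes> inv h"
  proof
    fix g assume gc: "g \<in> carrier G"
    define x where "x = rep (H #> g)"
    have xc: "x \<in> carrier G" unfolding x_def using rep_c[OF gc] .
    have "x \<otimes> inv g \<in> H" unfolding x_def using subgroup.rcos_module_imp[OF HS is_group gc rep_in[OF gc]] .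
    then obtain h0 where h0: "h0 \<in> H" "x = h0 \<otimes> g"
      using gc xc by (metis inv_solve_right subgroup.mem_carrier[OF HS])
    have h0c: "h0 \<in> carrier G" using h0 subgroup.mem_carrier[OF HS] by blast
    have "x \<otimes> s \<otimes> inv x = h0 \<otimes> (g \<otimes> s \<otimes> inv g) \<otimes> inv h0"
      using conj_mult[OF h0c gc sc] h0(2) by simp
    then have gx: "g \<otimes> s \<otimes> inv g = inv h0 \<otimes> (x \<otimes> s \<otimes> inv x) \<otimes> inv (inv h0)" "inv h0 \<in> H"
      using R_sym[OF HS h0(1)] gc sc by auto
    have "x \<otimes> s \<otimes> inv x \<in> T0" unfolding T0_def x_def using rcosetsI[OF subgroup.subset[OF HS] gc] by blast
    then obtain w h1 where w: "w \<in> T" "h1 \<in> H" "x \<otimes> s \<otimes> inv x = h1 \<otimes> w \<otimes> inv h1"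
      using Tcov unfolding R_def by blast
    have wc: "w \<in> carrier G" using w(1) TT0 T0c by blast
    show "\<exists>h\<in>H. \<exists>w\<in>T. g \<otimes> s \<otimes> inv g = h \<otimes> w \<otimes> inv h"
      using R_trans[OF HS gx(2) w(2) wc gx(1) w(3)] w(1) by blast
  qed
  define xw where "xw = (\<lambda>w. SOME x. x \<in> carrier G \<and> w = x \<otimes> s \<otimes> inv x)"
  have xw: "\<And>w. w \<in> T \<Longrightarrow> xw w \<in> carrier G \<and> w = xw w \<otimes> s \<otimes> inv (xw w)"
  proof -
    fix w assume "w \<in> T"
    then have "\<exists>x. x \<in> carrier G \<and> w = x \<otimes> s \<otimes> inv x" using Tconj by blast
    then show "xw w \<in> carrier G \<and> w = xw w \<otimes> s \<otimes> inv (xw w)" unfolding xw_def by (rule someI_ex)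
  qed
  have powc: "\<And>i::nat. a [^] i \<in> carrier G" using ac by simp
  define \<phi> where "\<phi> = (\<lambda>(w, i::nat). H #> (xw w \<otimes> a [^] i))"
  have img: "\<phi> ` (T \<times> {..<r}) \<subseteq> rcosets H"
    unfolding \<phi>_def using xw rcosetsI[OF subgroup.subset[OF HS]] powc by auto
  have conj_a: "\<And>y i. y \<in> carrier G \<Longrightarrow> (y \<otimes> a [^] (i::nat)) \<otimes> s \<otimes> inv (y \<otimes> a [^] i) = y \<otimes> s \<otimes> inv y"
  proof -
    fix y i assume yc: "y \<in> carrier G"
    have "a [^] (i::nat) \<otimes> s \<otimes> inv (a [^] i) = s" using pow_comm_conj[OF ac, of i n] an by simp
    then show "(y \<otimes> a [^] (i::nat)) \<otimes> s \<otimes> inv (y \<otimes> a [^] i) = y \<otimes> s \<otimes> inv y"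
      using conj_mult[OF yc powc sc] by simp
  qed
  have inj: "inj_on \<phi> (T \<times> {..<r})"
  proof (rule inj_onI)
    fix p1 p2 assume p1: "p1 \<in> T \<times> {..<r}" and p2: "p2 \<in> T \<times> {..<r}" and eqp: "\<phi> p1 = \<phi> p2"
    obtain v i where vi: "p1 = (v, i)" "v \<in> T" "i < r" using p1 by auto
    obtain w j where wj: "p2 = (w, j)" "w \<in> T" "j < r" using p2 by auto
    define x where "x = xw v"
    define y where "y = xw w"
    have xc: "x \<in> carrier G" and vx: "v = x \<otimes> s \<otimes> inv x" using xw[OF vi(2)] unfolding x_def by auto
    have yc: "y \<in> carrier G" and wy: "w = y \<otimes> s \<otimes> inv y" using xw[OF wj(2)] unfolding y_def by auto
    have xac: "x \<otimes> a [^] i \<in> carrier G" and yac: "y \<otimes> a [^] j \<in> carrier G" using xc yc powc by auto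
    have eq: "H #> (x \<otimes> a [^] i) = H #> (y \<otimes> a [^] j)"
      using eqp vi(1) wj(1) unfolding \<phi>_def x_def y_def by simp
    have "y \<otimes> a [^] j \<in> H #> (x \<otimes> a [^] i)" using eq rcos_self[OF yac HS] by simp
    then have hH: "y \<otimes> a [^] j \<otimes> inv (x \<otimes> a [^] i) \<in> H"
      using subgroup.rcos_module_imp[OF HS is_group xac] by blast
    define h where "h = y \<otimes> a [^] j \<otimes> inv (x \<otimes> a [^] i)"
    have hc: "h \<in> carrier G" unfolding h_def using xac yac by simp
    have yh: "y \<otimes> a [^] j = h \<otimes> (x \<otimes> a [^] i)"
      using inv_solve_right[OF hc yac xac] unfolding h_def by simp
    have "w = (y \<otimes> a [^] j) \<otimes> s \<otimes> inv (y \<otimes> a [^] j)" using conj_a[OF yc] wy by simp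
    also have "\<dots> = h \<otimes> ((x \<otimes> a [^] i) \<otimes> s \<otimes> inv (x \<otimes> a [^] i)) \<otimes> inv h"
      using yh conj_mult[OF hc xac sc] by simp
    also have "\<dots> = h \<otimes> v \<otimes> inv h" using conj_a[OF xc] vx by simp
    finally have "R w v" unfolding R_def using hH h_def by blast
    then have wv: "w = v" using Tdist wj(2) vi(2) by blast
    then have xy: "x = y" unfolding x_def y_def by simp
    have "inv x \<otimes> h \<otimes> x \<in> H" using normal.inv_op_closed1[OF HN xc] hH h_def by simp
    moreover have "inv x \<otimes> h \<otimes> x = a [^] j \<otimes> inv (a [^] i)"
      unfolding h_def xy using yc powc by (simp add: inv_mult_group m_assoc)
    moreover have "a [^] j \<otimes> inv (a [^] i) = a [^] (int j - int i)"
      using int_pow_diff[OF ac, of "int j" "int i"] by (simp add: int_pow_int)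
    ultimately have "int r dvd (int j - int i)" using rdvd by simp
    then have "int j - int i = 0"
      using dvd_imp_le_int[of "int j - int i" "int r"] vi(3) wj(3) by fastforce
    then show "p1 = p2" using vi(1) wj(1) wv by simp
  qed
  have "card (T \<times> {..<r}) \<le> card (rcosets H)" using card_inj_on_le[OF inj img fin] .
  then have card_bound: "card T * r \<le> card (rcosets H)" by (simp add: card_cartesian_product)
  have nub: "nu_inv (G\<lparr>carrier := H\<rparr>) (K \<inter> H) w \<le> real r / real N" if wT: "w \<in> T" for w
  proof -
    define x where "x = xw w"
    have xc: "x \<in> carrier G" and wx: "w = x \<otimes> s \<otimes> inv x" using xw[OF wT] unfolding x_def by auto
    define b where "b = x \<otimes> a [^] r \<otimes> inv x"
    have bH: "b \<in> H" unfolding b_def using normal.inv_op_closed2[OF HN xc arH] .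
    have bc: "b \<in> carrier G" unfolding b_def using xc ac by simp
    have "(a [^] r) [^] q = s"
      using int_pow_pow[OF ac, of "int r" q] an nq by (simp add: int_pow_int)
    then have bq: "b [^] q = w" unfolding b_def using conj_int_pow[OF xc powc, of r q] wx by simp
    have bqH: "b [^]\<^bsub>G\<lparr>carrier := H\<rparr>\<^esub> q = w" using int_pow_consistent[OF HS bH] bq by simp
    have wH: "w \<in> H" using wT TH by blast
    have "\<exists>m. 1 \<le> m \<and> N \<le> m * r \<and> enat m \<le> nu (G\<lparr>carrier := H\<rparr>) (K \<inter> H) w"
    proof (cases "s \<in> K")
      case False
      have wK: "w \<notin> K"
      proof
        assume "w \<in> K"
        then have "inv x \<otimes> w \<otimes> x \<in> K" using normal.inv_op_closed1[OF KN xc] by simp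
        moreover have "inv x \<otimes> w \<otimes> x = s" using wx xc sc by (simp add: m_assoc)
        ultimately show False using False by simp
      qed
      have nN: "int N \<le> n" using good False by simp
      then have "0 < int r * q" using nq N1 by linarith
      then have qpos: "0 < q" using r0 by (simp add: zero_less_mult_iff)
      have "enat (nat q) \<in> {enat (nat n) | n::int. n \<noteq> 0 \<and> (\<exists>a\<in>carrier (G\<lparr>carrier := H\<rparr>). w = a [^]\<^bsub>G\<lparr>carrier := H\<rparr>\<^esub> n)}"
        using qpos bH bqH by force
      then have "enat (nat q) \<le> nu (G\<lparr>carrier := H\<rparr>) (K \<inter> H) w"
        unfolding nu_def using wK by (simp add: Sup_upper)
      moreover have "1 \<le> nat q" using qpos by simp
      moreover have "N \<le> nat q * r"
      proof -
        have i1: "int N \<le> int r * q" using nN nq by simp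
        have i2: "int (nat q * r) = int r * q" using qpos by simp
        have "int N \<le> int (nat q * r)" unfolding i2 by (rule i1)
        then show ?thesis by (simp only: of_nat_le_iff)
      qed
      ultimately show ?thesis by blast
    next
      case True
      have sK: "s \<in> K" using True .
      have eN: "enat N \<le> elt_order (G Mod K) (K #> a)" using good True by simp
      have wK: "w \<in> K \<inter> H" using normal.inv_op_closed2[OF KN xc sK] wx wH by simp
      define m where "m = (N + r - 1) div r"
      have m1: "1 \<le> m" unfolding m_def using arith_m1[OF r0 N1] .
      have mN: "N \<le> m * r" unfolding m_def using arith_m2[OF r0] .
      have NK: "(K \<inter> H) \<lhd> G\<lparr>carrier := H\<rparr>" using normal_Int_subgroup[OF HS KN] .
      have grpQ: "group (G\<lparr>carrier := H\<rparr> Mod (K \<inter> H))" using normal.factorgroup_is_group[OF NK] .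
      have bcH: "b \<in> carrier (G\<lparr>carrier := H\<rparr>)" using bH by simp
      have cQ: "(K \<inter> H) #>\<^bsub>G\<lparr>carrier := H\<rparr>\<^esub> b \<in> carrier (G\<lparr>carrier := H\<rparr> Mod (K \<inter> H))"
        using bcH unfolding carrier_FactGroup by blast
      have grpGK: "group (G Mod K)" using normal.factorgroup_is_group[OF KN] .
      have cGK: "K #> a \<in> carrier (G Mod K)" using ac unfolding carrier_FactGroup by blast
      have "enat m \<le> elt_order (G\<lparr>carrier := H\<rparr> Mod (K \<inter> H)) ((K \<inter> H) #>\<^bsub>G\<lparr>carrier := H\<rparr>\<^esub> b)"
      proof (rule eo_ge[OF grpQ cQ])
        fix j :: nat assume j0: "0 < j" and jm: "j < m"
        show "((K \<inter> H) #>\<^bsub>G\<lparr>carrier := H\<rparr>\<^esub> b) [^]\<^bsub>G\<lparr>carrier := H\<rparr> Mod (K \<inter> H)\<^esub> j \<noteq> \<one>\<^bsub>G\<lparr>carrier := H\<rparr> Mod (K \<inter> H)\<^esub>"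
        proof
          assume "((K \<inter> H) #>\<^bsub>G\<lparr>carrier := H\<rparr>\<^esub> b) [^]\<^bsub>G\<lparr>carrier := H\<rparr> Mod (K \<inter> H)\<^esub> j = \<one>\<^bsub>G\<lparr>carrier := H\<rparr> Mod (K \<inter> H)\<^esub>"
          then have "b [^]\<^bsub>G\<lparr>carrier := H\<rparr>\<^esub> j \<in> K \<inter> H" using normal.pow_in_iff[OF NK bcH] by blast
          then have "b [^] j \<in> K" using nat_pow_consistent[of b j H] by simp
          moreover have "b [^] j = x \<otimes> a [^] (r * j) \<otimes> inv x"
            unfolding b_def using conj_nat_pow[OF xc powc, of r j] ac by (simp add: nat_pow_pow)
          ultimately have "x \<otimes> a [^] (r * j) \<otimes> inv x \<in> K" by simp
          then have "inv x \<otimes> (x \<otimes> a [^] (r * j) \<otimes> inv x) \<otimes> x \<in> K" using normal.inv_op_closed1[OF KN xc] by simp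
          moreover have "inv x \<otimes> (x \<otimes> a [^] (r * j) \<otimes> inv x) \<otimes> x = a [^] (r * j)" using xc powc by (simp add: m_assoc)
          ultimately have "a [^] (r * j) \<in> K" by simp
          then have "(K #> a) [^]\<^bsub>G Mod K\<^esub> (r * j) = \<one>\<^bsub>G Mod K\<^esub>" using normal.pow_in_iff[OF KN ac] by blast
          then have "elt_order (G Mod K) (K #> a) \<le> enat (r * j)" using eo_le[OF grpGK cGK] r0 j0 by simp
          then have "N \<le> r * j" using eN by (metis enat_ord_simps(1) order_trans)
          then show False using arith_m3[OF r0 jm[unfolded m_def]] by simp
        qed
      qed
      moreover have "elt_order (G\<lparr>carrier := H\<rparr> Mod (K \<inter> H)) ((K \<inter> H) #>\<^bsub>G\<lparr>carrier := H\<rparr>\<^esub> b)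
          \<in> {elt_order (G\<lparr>carrier := H\<rparr> Mod (K \<inter> H)) ((K \<inter> H) #>\<^bsub>G\<lparr>carrier := H\<rparr>\<^esub> a) | a.
               a \<in> carrier (G\<lparr>carrier := H\<rparr>) \<and> (\<exists>n::int. a [^]\<^bsub>G\<lparr>carrier := H\<rparr>\<^esub> n = w)}"
        using bcH bqH by blast
      then have "elt_order (G\<lparr>carrier := H\<rparr> Mod (K \<inter> H)) ((K \<inter> H) #>\<^bsub>G\<lparr>carrier := H\<rparr>\<^esub> b) \<le> nu (G\<lparr>carrier := H\<rparr>) (K \<inter> H) w"
        unfolding nu_def using wK by (simp add: Sup_upper)
      ultimately show ?thesis using m1 mN by (metis order_trans)
    qed
    then obtain m where m: "1 \<le> m" "N \<le> m * r" "enat m \<le> nu (G\<lparr>carrier := H\<rparr>) (K \<inter> H) w" by blast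
    have "nu_inv (G\<lparr>carrier := H\<rparr>) (K \<inter> H) w \<le> 1 / real m" using nu_inv_le[OF m(3,1)] .
    also have "\<dots> \<le> real r / real N" using arith_m4[OF m(1) N1 m(2)] .
    finally show ?thesis .
  qed
  have "(\<Sum>w\<in>T. nu_inv (G\<lparr>carrier := H\<rparr>) (K \<inter> H) w) \<le> (\<Sum>w\<in>T. real r / real N)"
    using nub by (rule sum_mono)
  also have "\<dots> = real (card T * r) / real N" by simp
  also have "\<dots> \<le> real (card (rcosets H)) / real N"
  proof (rule divide_right_mono)
    show "real (card T * r) \<le> real (card (rcosets H))" using card_bound by (simp only: of_nat_le_iff)
  qed simp
  finally show ?thesis using Tfin TH Tconj Tcover by blast
qed


lemma nu_ge1:
  assumes "g \<in> carrier G"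
  shows "enat 1 \<le> nu G K g"
proof (cases "g \<in> K")
  case True
  have "elt_order (G Mod K) (K #> g) \<in> {elt_order (G Mod K) (K #> a) | a. a \<in> carrier G \<and> (\<exists>n::int. a [^] n = g)}"
    using assms by (intro CollectI exI[of _ g] conjI) (auto intro: exI[of _ "1::int"])
  then have "elt_order (G Mod K) (K #> g) \<le> nu G K g" unfolding nu_def using True by (simp add: Sup_upper)
  moreover have "enat 1 \<le> elt_order (G Mod K) (K #> g)" unfolding elt_order_def by (simp add: Suc_leI)
  ultimately show ?thesis by (rule order_trans[rotated])
next
  case False
  have "enat (nat 1) \<in> {enat (nat n) | n::int. n \<noteq> 0 \<and> (\<exists>a\<in>carrier G. g = a [^] n)}"
    using assms by (intro CollectI exI[of _ "1::int"] conjI) (auto intro: bexI[of _ g])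
  then show ?thesis unfolding nu_def using False by (simp add: Sup_upper)
qed

end

lemma sum_UN_le_nonneg:
  fixes f :: "'a \<Rightarrow> real"
  assumes "finite I" "\<And>i. i \<in> I \<Longrightarrow> finite (A i)" "\<And>x. 0 \<le> f x"
  shows "sum f (\<Union>i\<in>I. A i) \<le> (\<Sum>i\<in>I. sum f (A i))"
  using assms
proof (induction I rule: finite_induct)
  case empty then show ?case by simp
next
  case (insert j I)
  have fin: "finite (\<Union>i\<in>I. A i)" "finite (A j)" using insert.prems insert.hyps by auto
  have "sum f (\<Union>i\<in>insert j I. A i) = sum f (A j \<union> (\<Union>i\<in>I. A i))" by simp
  also have "\<dots> = sum f (A j) + sum f (\<Union>i\<in>I. A i) - sum f (A j \<inter> (\<Union>i\<in>I. A i))"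
    using sum_Un[OF fin(2) fin(1)] .
  also have "\<dots> \<le> sum f (A j) + sum f (\<Union>i\<in>I. A i)"
    using sum_nonneg[of "A j \<inter> (\<Union>i\<in>I. A i)" f] insert.prems(2) by simp
  also have "\<dots> \<le> sum f (A j) + (\<Sum>i\<in>I. sum f (A i))" using insert.IH insert.prems by simp
  also have "\<dots> = (\<Sum>i\<in>insert j I. sum f (A i))" using insert.hyps by simp
  finally show ?case .
qed

context group begin

lemma main_in_group:
  assumes MN: "M \<lhd> G" and KN: "K \<lhd> G" and HN: "H \<lhd> G" and fin: "finite (rcosets H)" and MH: "M \<subseteq> H"
  shows "relsize (G\<lparr>carrier := H\<rparr>) (K \<inter> H) M
           \<le> ereal (real (card (rcosets H))) * relsize G K M"
proof -
  have HS: "subgroup H G" using HN normal_imp_subgroup by blast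
  define k where "k = card (rcosets H)"
  have "H #> \<one> \<in> rcosets H" using rcosetsI[OF subgroup.subset[OF HS]] by simp
  then have k1: "1 \<le> k" unfolding k_def using fin by (metis One_nat_def Suc_leI card_gt_0_iff empty_iff)
  define L where "L = relsize (G\<lparr>carrier := H\<rparr>) (K \<inter> H) M"
  have key: "L \<le> ereal (real k * relsize_set G K S)"
    if Sfin: "finite S" and SG: "S \<subseteq> carrier G" and SM: "normal_closure G S = M" for S
  proof (rule ereal_le_epsilon2)
    fix e :: real assume e0: "0 < e"
    define N0 where "N0 = nat \<lceil>real (card S) * real k / e\<rceil> + 1"
    have N01: "1 \<le> N0" unfolding N0_def by simp
    have "real (card S) * real k / e \<le> real N0" unfolding N0_def by linarith
    then have eN0: "real (card S) * (real k / real N0) \<le> e"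
      using e0 N01 by (simp add: field_simps)
    have SH: "S \<subseteq> H" using normal_closure_normal(2)[OF SG] SM MH by simp
    have "\<forall>s\<in>S. \<exists>T. finite T \<and> T \<subseteq> H \<and> (\<forall>w\<in>T. \<exists>x\<in>carrier G. w = x \<otimes> s \<otimes> inv x)
       \<and> (\<forall>g\<in>carrier G. \<exists>h\<in>H. \<exists>w\<in>T. g \<otimes> s \<otimes> inv g = h \<otimes> w \<otimes> inv h)
       \<and> (\<Sum>w\<in>T. nu_inv (G\<lparr>carrier := H\<rparr>) (K \<inter> H) w) \<le> real k * nu_inv G K s + real k / real N0"
    proof
      fix s assume sS: "s \<in> S"
      have sH: "s \<in> H" using sS SH by blast
      have sc: "s \<in> carrier G" using sS SG by blast
      show "\<exists>T. finite T \<and> T \<subseteq> H \<and> (\<forall>w\<in>T. \<exists>x\<in>carrier G. w = x \<otimes> s \<otimes> inv x)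
       \<and> (\<forall>g\<in>carrier G. \<exists>h\<in>H. \<exists>w\<in>T. g \<otimes> s \<otimes> inv g = h \<otimes> w \<otimes> inv h)
       \<and> (\<Sum>w\<in>T. nu_inv (G\<lparr>carrier := H\<rparr>) (K \<inter> H) w) \<le> real k * nu_inv G K s + real k / real N0"
      proof (cases "nu G K s")
        case (enat m)
        have m1: "1 \<le> m" using nu_ge1[OF sc, of K] enat by simp
        obtain T where T: "finite T" "T \<subseteq> H" "\<forall>w\<in>T. \<exists>x\<in>carrier G. w = x \<otimes> s \<otimes> inv x"
          "\<forall>g\<in>carrier G. \<exists>h\<in>H. \<exists>w\<in>T. g \<otimes> s \<otimes> inv g = h \<otimes> w \<otimes> inv h"
          "(\<Sum>w\<in>T. nu_inv (G\<lparr>carrier := H\<rparr>) (K \<inter> H) w) \<le> real k / real m"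
          using core[OF HN fin KN sH m1] enat unfolding k_def by auto
        have "real k / real m = real k * nu_inv G K s" using enat by (simp add: nu_inv_def)
        moreover have "0 \<le> real k / real N0" by simp
        ultimately have "(\<Sum>w\<in>T. nu_inv (G\<lparr>carrier := H\<rparr>) (K \<inter> H) w) \<le> real k * nu_inv G K s + real k / real N0"
          using T(5) by linarith
        then show ?thesis using T(1-4) by (intro exI[of _ T]) auto
      next
        case infinity
        obtain T where T: "finite T" "T \<subseteq> H" "\<forall>w\<in>T. \<exists>x\<in>carrier G. w = x \<otimes> s \<otimes> inv x"
          "\<forall>g\<in>carrier G. \<exists>h\<in>H. \<exists>w\<in>T. g \<otimes> s \<otimes> inv g = h \<otimes> w \<otimes> inv h"
          "(\<Sum>w\<in>T. nu_inv (G\<lparr>carrier := H\<rparr>) (K \<inter> H) w) \<le> real k / real N0"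
          using core[OF HN fin KN sH N01] infinity unfolding k_def by auto
        have "nu_inv G K s = 0" using infinity by (simp add: nu_inv_def)
        then show ?thesis using T by (intro exI[of _ T]) auto
      qed
    qed
    then obtain f where f: "\<forall>s\<in>S. finite (f s) \<and> f s \<subseteq> H \<and> (\<forall>w\<in>f s. \<exists>x\<in>carrier G. w = x \<otimes> s \<otimes> inv x)
       \<and> (\<forall>g\<in>carrier G. \<exists>h\<in>H. \<exists>w\<in>f s. g \<otimes> s \<otimes> inv g = h \<otimes> w \<otimes> inv h)
       \<and> (\<Sum>w\<in>f s. nu_inv (G\<lparr>carrier := H\<rparr>) (K \<inter> H) w) \<le> real k * nu_inv G K s + real k / real N0"
      by (rule bchoice[elim_format]) blast
    define T where "T = (\<Union>s\<in>S. f s)"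
    have Tfin: "finite T" unfolding T_def using Sfin f by blast
    have TH: "T \<subseteq> H" unfolding T_def using f by blast
    have Tconj: "\<forall>t\<in>T. \<exists>s\<in>S. \<exists>g\<in>carrier G. t = g \<otimes> s \<otimes> inv g"
    proof
      fix t assume "t \<in> T"
      then obtain s where s: "s \<in> S" "t \<in> f s" unfolding T_def by blast
      then obtain x where x: "x \<in> carrier G" "t = x \<otimes> s \<otimes> inv x" using f by meson
      show "\<exists>s\<in>S. \<exists>g\<in>carrier G. t = g \<otimes> s \<otimes> inv g" using s(1) x by (intro bexI) 
    qed
    have cov: "\<forall>s\<in>S. \<forall>g\<in>carrier G. \<exists>h\<in>H. \<exists>w\<in>T. g \<otimes> s \<otimes> inv g = h \<otimes> w \<otimes> inv h"
    proof (intro ballI)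
      fix s g assume s: "s \<in> S" and g: "g \<in> carrier G"
      then obtain h w where hw: "h \<in> H" "w \<in> f s" "g \<otimes> s \<otimes> inv g = h \<otimes> w \<otimes> inv h" using f by meson
      have "w \<in> T" unfolding T_def using hw(2) s by blast
      then show "\<exists>h\<in>H. \<exists>w\<in>T. g \<otimes> s \<otimes> inv g = h \<otimes> w \<otimes> inv h" using hw(1,3) by (intro bexI)
    qed
    have ncl: "normal_closure (G\<lparr>carrier := H\<rparr>) T = M"
      using closure_eq[OF HN MN MH SG SM TH Tconj cov] .
    have mem: "ereal (relsize_set (G\<lparr>carrier := H\<rparr>) (K \<inter> H) T) \<in> {ereal (relsize_set (G\<lparr>carrier := H\<rparr>) (K \<inter> H) S) | S.
      finite S \<and> S \<subseteq> carrier (G\<lparr>carrier := H\<rparr>) \<and> normal_closure (G\<lparr>carrier := H\<rparr>) S = M}"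
      using Tfin TH ncl by (intro CollectI exI[of _ T]) simp
    have L1: "L \<le> ereal (relsize_set (G\<lparr>carrier := H\<rparr>) (K \<inter> H) T)"
      unfolding L_def relsize_def by (rule Inf_lower[OF mem])
    have ffin: "\<And>s. s \<in> S \<Longrightarrow> finite (f s)" using f by meson
    have fsum: "\<And>s. s \<in> S \<Longrightarrow> (\<Sum>w\<in>f s. nu_inv (G\<lparr>carrier := H\<rparr>) (K \<inter> H) w) \<le> real k * nu_inv G K s + real k / real N0"
      using f by meson
    have "relsize_set (G\<lparr>carrier := H\<rparr>) (K \<inter> H) T \<le> (\<Sum>s\<in>S. \<Sum>w\<in>f s. nu_inv (G\<lparr>carrier := H\<rparr>) (K \<inter> H) w)"
      unfolding relsize_set_def T_def by (rule sum_UN_le_nonneg[OF Sfin ffin nu_inv_nonneg])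
    also have "\<dots> \<le> (\<Sum>s\<in>S. real k * nu_inv G K s + real k / real N0)"
      by (rule sum_mono) (rule fsum)
    also have "\<dots> = real k * relsize_set G K S + real (card S) * (real k / real N0)"
      unfolding relsize_set_def by (simp add: sum.distrib sum_distrib_left)
    also have "\<dots> \<le> real k * relsize_set G K S + e" using eN0 by simp
    finally have "relsize_set (G\<lparr>carrier := H\<rparr>) (K \<inter> H) T \<le> real k * relsize_set G K S + e" .
    then have "ereal (relsize_set (G\<lparr>carrier := H\<rparr>) (K \<inter> H) T) \<le> ereal (real k * relsize_set G K S) + ereal e"
      by simp
    then show "L \<le> ereal (real k * relsize_set G K S) + ereal e" using L1 by (rule order_trans[rotated])
  qed
  define A where "A = {ereal (relsize_set G K S) | S. finite S \<and> S \<subseteq> carrier G \<and> normal_closure G S = M}"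
  have kpos: "0 < ereal (real k)" "ereal (real k) \<noteq> \<infinity>" using k1 by auto
  have "L / ereal (real k) \<le> Inf A"
  proof (rule Inf_greatest)
    fix x assume "x \<in> A"
    then obtain S where S: "finite S" "S \<subseteq> carrier G" "normal_closure G S = M" "x = ereal (relsize_set G K S)"
      unfolding A_def by blast
    have "L \<le> ereal (real k) * x" using key[OF S(1-3)] S(4) by simp
    then show "L / ereal (real k) \<le> x" using ereal_divide_le_pos[OF kpos] by blast
  qed
  then have "L \<le> ereal (real k) * Inf A" using ereal_divide_le_pos[OF kpos] by blast
  then show ?thesis unfolding L_def k_def A_def relsize_def .
qed

end

theorem mainTheorem14:
  fixes G :: "('a, 'b) monoid_scheme" and M K H :: "'a set"
  assumes "group G"
    and "M \<lhd> G" and "K \<lhd> G"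
    and "\<exists>S. finite S \<and> S \<subseteq> carrier G \<and> normal_closure G S = M"
    and "H \<lhd> G" and "finite (rcosets\<^bsub>G\<^esub> H)" and "M \<subseteq> H"
  shows "relsize (G\<lparr>carrier := H\<rparr>) (K \<inter> H) M
           \<le> ereal (real (card (rcosets\<^bsub>G\<^esub> H))) * relsize G K M"
  using group.main_in_group[OF assms(1,2,3,5,6,7)] .
end
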